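(* Let $1<q\le\infty$, let $X$ be an $\mathcal L_2$-space and $Y$ a Banach space. Then every almost summing operator $u:X\to Y$ is Cohen strongly $q$-summing; that is, $\Pi_{al.s}(X,Y)\subseteq\mathcal D_q(X,Y)$.
   Context: $r_i$ denote the Rademacher functions. For $1\le s\le\infty$, $\|(x_i)_{i=1}^m\|_{w,s}:=\sup_{x^*\in B_{E^*}}\|(x^*(x_i))_{i=1}^m\|_s$. An operator $u\in\mathcal L(X,Y)$ is almost summing ($u\in\Pi_{al.s}(X,Y)$) if there is $C\ge0$ with $\left(\int_0^1\left\|\sum_{i=1}^m r_i(t)u(x_i)\right\|^2dt\right)^{1/2}\le C\|(x_i)_{i=1}^m\|_{w,2}$ for all $m$ and $x_1,\dots,x_m\in X$. $u$ is Cohen strongly $q$-summing ($u\in\mathcal D_q(X,Y)$) if there is $C\ge0$ with $\sum_{i=1}^m|y_i^*(u(x_i))|\le C(\sum_{i=1}^m\|x_i\|^q)^{1/q}\,\|(y_i^* )_{i=1}^m\|_{w,q^*}$ for all finite families $x_i\in X$, $y_i^*\in Y^*$, where $\frac1q+\frac1{q^*}=1$. A Banach space $X$ is an $\mathcal L_2$-space if there is $\lambda>1$ such that every finite-dimensional subspace $E$ of $X$ is contained in a finite-dimensional subspace $F$ of $X$ admitting an isomorphism $v:F\to\ell_2^{\dim F}$ with $\|v\|\|v^{-1}\|\le\lambda$. *)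

theory Defs
  imports "HOL-Analysis.Analysis"
begin

text \<open>Real scalars throughout. Exponents live in ereal so that the value infinity is allowed.\<close>

definition rademacher :: "nat \<Rightarrow> real \<Rightarrow> real" where
  "rademacher i t = sgn (sin (2 ^ i * pi * t))"

definition lpnorm :: "ereal \<Rightarrow> nat \<Rightarrow> (nat \<Rightarrow> real) \<Rightarrow> real" where
  "lpnorm p m a = (if p = \<infinity> then (if m = 0 then 0 else Max ((\<lambda>i. \<bar>a i\<bar>) ` {..<m}))
                   else (\<Sum>i<m. \<bar>a i\<bar> powr real_of_ereal p) powr (1 / real_of_ereal p))"

definition conj_exp :: "ereal \<Rightarrow> ereal" where
  "conj_exp q = (if q = \<infinity> then 1 else ereal (real_of_ereal q / (real_of_ereal q - 1)))"

definition weak_norm :: "ereal \<Rightarrow> nat \<Rightarrow> (nat \<Rightarrow> 'e::real_normed_vector) \<Rightarrow> real" where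
  "weak_norm s m x = (SUP f \<in> {f :: 'e \<Rightarrow>\<^sub>L real. norm f \<le> 1}. lpnorm s m (\<lambda>i. blinfun_apply f (x i)))"

definition almost_summing :: "('a::real_normed_vector \<Rightarrow> 'b::real_normed_vector) \<Rightarrow> bool" where
  "almost_summing u \<longleftrightarrow> bounded_linear u \<and>
     (\<exists>C\<ge>0. \<forall>m (x :: nat \<Rightarrow> 'a).
        sqrt (integral {0..1} (\<lambda>t. (norm (\<Sum>i\<in>{1..m}. rademacher i t *\<^sub>R u (x i)))\<^sup>2))
          \<le> C * weak_norm 2 m (\<lambda>j. x (j + 1)))"

definition cohen_strongly_summing :: "ereal \<Rightarrow> ('a::real_normed_vector \<Rightarrow> 'b::real_normed_vector) \<Rightarrow> bool" where
  "cohen_strongly_summing q u \<longleftrightarrow> bounded_linear u \<and>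
     (\<exists>C\<ge>0. \<forall>m (x :: nat \<Rightarrow> 'a) (y :: nat \<Rightarrow> ('b \<Rightarrow>\<^sub>L real)).
        (\<Sum>i<m. \<bar>blinfun_apply (y i) (u (x i))\<bar>)
          \<le> C * lpnorm q m (\<lambda>i. norm (x i)) * weak_norm (conj_exp q) m y)"

text \<open>Euclidean norm of the first n coordinates (the space l_2^n is modelled as functions
  nat \<Rightarrow> real vanishing from n on).\<close>
definition l2n :: "nat \<Rightarrow> (nat \<Rightarrow> real) \<Rightarrow> real" where
  "l2n n y = sqrt (\<Sum>j<n. (y j)\<^sup>2)"

text \<open>F admits an isomorphism v onto l_2^(dim F) with \<parallel>v\<parallel> \<parallel>v^-1\<parallel> \<le> \<lambda>
  (a bounds \<parallel>v\<parallel>, b bounds \<parallel>v^-1\<parallel>).\<close>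
definition l2_isomorphic :: "real \<Rightarrow> 'a::real_normed_vector set \<Rightarrow> bool" where
  "l2_isomorphic lam F \<longleftrightarrow> (\<exists>(v :: 'a \<Rightarrow> nat \<Rightarrow> real) a b.
      (\<forall>x\<in>F. \<forall>y\<in>F. v (x + y) = (\<lambda>j. v x j + v y j)) \<and>
      (\<forall>c. \<forall>x\<in>F. v (c *\<^sub>R x) = (\<lambda>j. c * v x j)) \<and>
      bij_betw v F {y. \<forall>j\<ge>dim F. y j = 0} \<and>
      0 \<le> a \<and> 0 \<le> b \<and> a * b \<le> lam \<and>
      (\<forall>x\<in>F. l2n (dim F) (v x) \<le> a * norm x \<and> norm x \<le> b * l2n (dim F) (v x)))"

definition fin_dim_subspace :: "'a::real_vector set \<Rightarrow> bool" where
  "fin_dim_subspace E \<longleftrightarrow> subspace E \<and> (\<exists>B. finite B \<and> E = span B)"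

definition L2_space :: "'a::real_normed_vector set \<Rightarrow> bool" where
  "L2_space X \<longleftrightarrow> (\<exists>lam>1. \<forall>E. fin_dim_subspace E \<and> E \<subseteq> X \<longrightarrow>
      (\<exists>F. fin_dim_subspace F \<and> E \<subseteq> F \<and> F \<subseteq> X \<and> l2_isomorphic lam F))"

end

theory Submission
  imports Defs
begin


primrec avg :: "nat \<Rightarrow> ((nat \<Rightarrow> real) \<Rightarrow> real) \<Rightarrow> real" where
  "avg 0 \<Phi> = \<Phi> (\<lambda>_. 1)"
| "avg (Suc n) \<Phi> = (avg n (\<lambda>\<rho>. \<Phi> (\<rho>(Suc n := 1))) + avg n (\<lambda>\<rho>. \<Phi> (\<rho>(Suc n := -1)))) / 2"

lemma avg_add: "avg n (\<lambda>\<rho>. \<Phi> \<rho> + \<Psi> \<rho>) = avg n \<Phi> + avg n \<Psi>"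
  by (induction n arbitrary: \<Phi> \<Psi>) (simp_all add: field_simps)

lemma avg_cmult: "avg n (\<lambda>\<rho>. c * \<Phi> \<rho>) = c * avg n \<Phi>"
  by (induction n arbitrary: \<Phi>) (simp_all add: field_simps)

lemma avg_const: "avg n (\<lambda>\<rho>. c) = c"
  by (induction n) simp_all

lemma avg_mono: "(\<And>\<rho>. \<Phi> \<rho> \<le> \<Psi> \<rho>) \<Longrightarrow> avg n \<Phi> \<le> avg n \<Psi>"
proof (induction n arbitrary: \<Phi> \<Psi>)
  case (Suc n)
  have "avg n (\<lambda>\<rho>. \<Phi> (\<rho>(Suc n := 1))) \<le> avg n (\<lambda>\<rho>. \<Psi> (\<rho>(Suc n := 1)))"
    by (rule Suc.IH) (rule Suc.prems)
  moreover have "avg n (\<lambda>\<rho>. \<Phi> (\<rho>(Suc n := -1))) \<le> avg n (\<lambda>\<rho>. \<Psi> (\<rho>(Suc n := -1)))"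
    by (rule Suc.IH) (rule Suc.prems)
  ultimately show ?case by simp
qed simp

lemma avg_sum: "finite I \<Longrightarrow> avg n (\<lambda>\<rho>. \<Sum>i\<in>I. f i \<rho>) = (\<Sum>i\<in>I. avg n (f i))"
  by (induction I rule: finite_induct) (simp_all add: avg_add avg_const)

lemma avg_nonneg: "(\<And>\<rho>. 0 \<le> \<Phi> \<rho>) \<Longrightarrow> 0 \<le> avg n \<Phi>"
  using avg_mono[of "\<lambda>_. 0" \<Phi> n] by (simp add: avg_const)

lemma avg_jensen: "avg n (\<lambda>\<rho>. \<bar>\<Phi> \<rho>\<bar>) \<le> sqrt (avg n (\<lambda>\<rho>. (\<Phi> \<rho>)\<^sup>2))"
proof -
  let ?E = "avg n (\<lambda>\<rho>. (\<Phi> \<rho>)\<^sup>2)"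
  have key: "avg n (\<lambda>\<rho>. \<bar>\<Phi> \<rho>\<bar>) \<le> c / 2 + ?E / (2 * c)" if "c > 0" for c
  proof -
    have "\<bar>\<Phi> \<rho>\<bar> \<le> c / 2 + (1 / (2 * c)) * (\<Phi> \<rho>)\<^sup>2" for \<rho>
    proof -
      have "0 \<le> (\<bar>\<Phi> \<rho>\<bar> - c)\<^sup>2" by simp
      hence "2 * c * \<bar>\<Phi> \<rho>\<bar> \<le> c\<^sup>2 + (\<Phi> \<rho>)\<^sup>2" by (simp add: power2_eq_square algebra_simps)
      thus ?thesis using that by (simp add: field_simps power2_eq_square)
    qed
    hence "avg n (\<lambda>\<rho>. \<bar>\<Phi> \<rho>\<bar>) \<le> avg n (\<lambda>\<rho>. c / 2 + (1 / (2 * c)) * (\<Phi> \<rho>)\<^sup>2)"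
      by (rule avg_mono)
    also have "\<dots> = c / 2 + (1 / (2 * c)) * ?E" by (simp only: avg_add avg_cmult avg_const)
    also have "\<dots> = c / 2 + ?E / (2 * c)" by simp
    finally show ?thesis .
  qed
  have E0: "?E \<ge> 0" by (rule avg_nonneg) simp
  show ?thesis
  proof (cases "?E > 0")
    case True
    have "avg n (\<lambda>\<rho>. \<bar>\<Phi> \<rho>\<bar>) \<le> sqrt ?E / 2 + ?E / (2 * sqrt ?E)" using key[of "sqrt ?E"] True by simp
    also have "\<dots> = sqrt ?E" using True by (simp add: field_simps)
    finally show ?thesis .
  next
    case False
    hence E: "?E = 0" using E0 by simp
    have "avg n (\<lambda>\<rho>. \<bar>\<Phi> \<rho>\<bar>) \<le> e" if "e > 0" for e using key[of "2*e"] that E by simp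
    hence "avg n (\<lambda>\<rho>. \<bar>\<Phi> \<rho>\<bar>) \<le> 0" by (metis dense not_le)
    thus ?thesis using E by simp
  qed
qed

definition rsum :: "nat \<Rightarrow> (nat \<Rightarrow> real) \<Rightarrow> (nat \<Rightarrow> real) \<Rightarrow> real" where
  "rsum n a \<rho> = (\<Sum>k\<in>{1..n}. \<rho> k * a k)"

lemma rsum_upd: "rsum n a (\<rho>(Suc n := s)) = rsum n a \<rho>"
  unfolding rsum_def by (rule sum.cong) auto

lemma rsum_Suc: "rsum (Suc n) a \<rho> = rsum n a \<rho> + \<rho> (Suc n) * a (Suc n)"
  unfolding rsum_def by simp

lemma avg_rsum2: "avg n (\<lambda>\<rho>. (rsum n a \<rho>)\<^sup>2) = (\<Sum>k\<in>{1..n}. (a k)\<^sup>2)"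
proof (induction n)
  case 0 then show ?case by (simp add: rsum_def)
next
  case (Suc n)
  have "avg (Suc n) (\<lambda>\<rho>. (rsum (Suc n) a \<rho>)\<^sup>2)
      = (avg n (\<lambda>\<rho>. (rsum n a \<rho> + a (Suc n))\<^sup>2) + avg n (\<lambda>\<rho>. (rsum n a \<rho> - a (Suc n))\<^sup>2)) / 2"
    by (simp add: rsum_Suc rsum_upd)
  also have "\<dots> = (avg n (\<lambda>\<rho>. 2 * (rsum n a \<rho>)\<^sup>2 + 2 * (a (Suc n))\<^sup>2)) / 2"
    by (simp add: avg_add[symmetric] power2_eq_square algebra_simps)
  also have "\<dots> = avg n (\<lambda>\<rho>. (rsum n a \<rho>)\<^sup>2) + (a (Suc n))\<^sup>2"
    by (simp add: avg_add avg_cmult avg_const)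
  finally show ?case using Suc by simp
qed

lemma avg_rsum4: "avg n (\<lambda>\<rho>. (rsum n a \<rho>)^4) \<le> 3 * (\<Sum>k\<in>{1..n}. (a k)\<^sup>2)\<^sup>2"
proof (induction n)
  case 0 then show ?case by (simp add: rsum_def)
next
  case (Suc n)
  let ?s = "\<Sum>k\<in>{1..n}. (a k)\<^sup>2" and ?b = "a (Suc n)"
  have "avg (Suc n) (\<lambda>\<rho>. (rsum (Suc n) a \<rho>)^4)
      = (avg n (\<lambda>\<rho>. (rsum n a \<rho> + ?b)^4) + avg n (\<lambda>\<rho>. (rsum n a \<rho> - ?b)^4)) / 2"
    by (simp add: rsum_Suc rsum_upd)
  also have "\<dots> = (avg n (\<lambda>\<rho>. 2 * (rsum n a \<rho>)^4 + (12 * ?b\<^sup>2) * (rsum n a \<rho>)\<^sup>2 + 2 * ?b^4)) / 2"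
    by (simp add: avg_add[symmetric] power2_eq_square power4_eq_xxxx algebra_simps)
  also have "\<dots> = avg n (\<lambda>\<rho>. (rsum n a \<rho>)^4) + 6 * ?b\<^sup>2 * ?s + ?b^4"
    by (simp add: avg_add avg_cmult avg_const avg_rsum2)
  also have "\<dots> \<le> 3 * ?s\<^sup>2 + 6 * ?b\<^sup>2 * ?s + ?b^4" using Suc by simp
  also have "\<dots> \<le> 3 * (?s + ?b\<^sup>2)\<^sup>2"
  proof -
    have h: "0 \<le> ?b^4" by simp
    have "3 * (?s + ?b\<^sup>2)\<^sup>2 = 3 * ?s\<^sup>2 + 6 * ?b\<^sup>2 * ?s + 3 * ?b^4"
      by (simp add: power2_eq_square power4_eq_xxxx algebra_simps)
    thus ?thesis using h by linarith
  qed
  finally show ?case by simp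
qed

lemma cubic_aux: "(x::real) \<ge> 0 \<Longrightarrow> x \<le> 4/3 + x^3 / 12"
proof -
  assume x: "x \<ge> 0"
  have "(x - 2)\<^sup>2 * (x + 4) \<ge> 0" using x by simp
  hence "x^3 - 12 * x + 16 \<ge> 0" by (simp add: power2_eq_square power3_eq_cube algebra_simps)
  thus ?thesis by simp
qed

lemma khintchine: "sqrt (\<Sum>k\<in>{1..n}. (a k)\<^sup>2) \<le> 2 * avg n (\<lambda>\<rho>. \<bar>rsum n a \<rho>\<bar>)"
proof -
  define \<sigma> where "\<sigma> = sqrt (\<Sum>k\<in>{1..n}. (a k)\<^sup>2)"
  have s2: "\<sigma>\<^sup>2 = (\<Sum>k\<in>{1..n}. (a k)\<^sup>2)" unfolding \<sigma>_def by (rule real_sqrt_pow2, rule sum_nonneg) simp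
  have s0: "\<sigma> \<ge> 0" unfolding \<sigma>_def by (rule real_sqrt_ge_zero, rule sum_nonneg) simp
  show ?thesis
  proof (cases "\<sigma> = 0")
    case True
    thus ?thesis using avg_nonneg[of "\<lambda>\<rho>. \<bar>rsum n a \<rho>\<bar>" n] by (simp add: \<sigma>_def)
  next
    case False
    hence sp: "\<sigma> > 0" using s0 by simp
    have pw: "s\<^sup>2 \<le> (4/3 * \<sigma>) * \<bar>s\<bar> + (1 / (12 * \<sigma>\<^sup>2)) * s^4" for s :: real
    proof -
      have "\<bar>s\<bar> / \<sigma> \<le> 4/3 + (\<bar>s\<bar> / \<sigma>)^3 / 12" by (rule cubic_aux) (use sp in simp)
      hence "\<bar>s\<bar> / \<sigma> * (\<sigma> * \<bar>s\<bar>) \<le> (4/3 + (\<bar>s\<bar> / \<sigma>)^3 / 12) * (\<sigma> * \<bar>s\<bar>)"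
        by (rule mult_right_mono) (use sp in simp)
      moreover have "\<bar>s\<bar> / \<sigma> * (\<sigma> * \<bar>s\<bar>) = s\<^sup>2" using sp by (simp add: power2_eq_square)
      moreover have "(4/3 + (\<bar>s\<bar> / \<sigma>)^3 / 12) * (\<sigma> * \<bar>s\<bar>) = (4/3 * \<sigma>) * \<bar>s\<bar> + (1 / (12 * \<sigma>\<^sup>2)) * s^4"
        using sp by (simp add: field_simps power2_eq_square power3_eq_cube power4_eq_xxxx)
      ultimately show ?thesis by simp
    qed
    have "\<sigma>\<^sup>2 = avg n (\<lambda>\<rho>. (rsum n a \<rho>)\<^sup>2)" using s2 avg_rsum2 by simp
    also have "\<dots> \<le> avg n (\<lambda>\<rho>. (4/3 * \<sigma>) * \<bar>rsum n a \<rho>\<bar> + (1 / (12 * \<sigma>\<^sup>2)) * (rsum n a \<rho>)^4)"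
      by (rule avg_mono) (rule pw)
    also have "\<dots> = (4/3 * \<sigma>) * avg n (\<lambda>\<rho>. \<bar>rsum n a \<rho>\<bar>) + (1 / (12 * \<sigma>\<^sup>2)) * avg n (\<lambda>\<rho>. (rsum n a \<rho>)^4)"
      by (simp only: avg_add avg_cmult)
    also have "\<dots> \<le> (4/3 * \<sigma>) * avg n (\<lambda>\<rho>. \<bar>rsum n a \<rho>\<bar>) + (1 / (12 * \<sigma>\<^sup>2)) * (3 * (\<sigma>\<^sup>2)\<^sup>2)"
    proof -
      have "avg n (\<lambda>\<rho>. (rsum n a \<rho>)^4) \<le> 3 * (\<sigma>\<^sup>2)\<^sup>2" using avg_rsum4[of n a] unfolding s2 .
      moreover have "0 \<le> 1 / (12 * \<sigma>\<^sup>2)" by simp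
      ultimately show ?thesis by (intro add_left_mono mult_left_mono)
    qed
    also have "\<dots> = (4/3 * \<sigma>) * avg n (\<lambda>\<rho>. \<bar>rsum n a \<rho>\<bar>) + \<sigma>\<^sup>2 / 4"
      using sp by (simp add: field_simps power2_eq_square)
    finally have "\<sigma> * \<sigma> \<le> \<sigma> * (16/9 * avg n (\<lambda>\<rho>. \<bar>rsum n a \<rho>\<bar>))" by (simp add: power2_eq_square)
    hence "\<sigma> \<le> 16/9 * avg n (\<lambda>\<rho>. \<bar>rsum n a \<rho>\<bar>)" using sp by simp
    moreover have "avg n (\<lambda>\<rho>. \<bar>rsum n a \<rho>\<bar>) \<ge> 0" by (rule avg_nonneg) simp
    ultimately have "\<sigma> \<le> 2 * avg n (\<lambda>\<rho>. \<bar>rsum n a \<rho>\<bar>)" by linarith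
    thus ?thesis by (simp add: \<sigma>_def)
  qed
qed



lemma rad_val:
  assumes i: "1 \<le> i" "i \<le> n" and t: "real k / 2^n < t" "t < (real k + 1) / 2^n"
  shows "rademacher i t = (if even (k div 2^(n-i)) then 1 else -1)"
proof -
  define d :: nat where "d = 2^(n-i)"
  define j where "j = k div d"
  have dpos: "d > 0" unfolding d_def by simp
  have pn: "(2::real)^n = 2^i * real d" unfolding d_def using i
    by (simp add: power_add[symmetric])
  have jd: "real j * real d \<le> real k" unfolding j_def
    by (metis of_nat_le_iff of_nat_mult div_times_less_eq_dividend)
  have kd: "real k + 1 \<le> (real j + 1) * real d"
  proof -
    have "k < (j + 1) * d" unfolding j_def using dpos
      by (metis add.commute div_mult_mod_eq mod_less_divisor add_less_cancel_right mult_Suc Suc_eq_plus1)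
    hence "k + 1 \<le> (j + 1) * d" by simp
    thus ?thesis by (metis of_nat_1 of_nat_add of_nat_le_iff of_nat_mult)
  qed
  define s where "s = 2^i * t"
  have s1: "real j < s"
  proof -
    have "real k < t * 2^n" using t(1) by (simp add: pos_divide_less_eq)
    hence "real k < s * real d" unfolding s_def pn by (simp add: algebra_simps)
    hence "real k / real d < s" using dpos by (simp add: pos_divide_less_eq)
    moreover have "real j \<le> real k / real d" using jd dpos by (simp add: field_simps)
    ultimately show ?thesis by linarith
  qed
  have s2: "s < real j + 1"
  proof -
    have "t * 2^n < real k + 1" using t(2) by (simp add: pos_less_divide_eq)
    hence "s * real d < real k + 1" unfolding s_def pn by (simp add: algebra_simps)
    hence "s < (real k + 1) / real d" using dpos by (simp add: pos_less_divide_eq)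
    moreover have "(real k + 1) / real d \<le> real j + 1" using kd dpos by (simp add: field_simps)
    ultimately show ?thesis by linarith
  qed
  define r where "r = s - real j"
  have r: "0 < r" "r < 1" using s1 s2 unfolding r_def by auto
  have "sin (2 ^ i * pi * t) = sin (real j * pi + r * pi)" unfolding r_def s_def by (simp add: algebra_simps)
  also have "\<dots> = (-1)^j * sin (r * pi)" by (simp add: sin_add)
  finally have eq: "sin (2 ^ i * pi * t) = (-1)^j * sin (r * pi)" .
  have sp: "sin (r * pi) > 0" using r by (intro sin_gt_zero) auto
  have R: "rademacher i t = sgn ((-1)^j * sin (r * pi))" unfolding rademacher_def eq ..
  have jj: "k div 2^(n-i) = j" unfolding j_def d_def ..
  show ?thesis
  proof (cases "even j")
    case True
    hence "(-1::real)^j = 1" by simp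
    hence "rademacher i t = 1" using R sp by simp
    thus ?thesis using True jj by simp
  next
    case False
    hence "(-1::real)^j = -1" by simp
    hence "rademacher i t = -1" using R sp by simp
    thus ?thesis using False jj by simp
  qed
qed

definition sgv :: "nat \<Rightarrow> nat \<Rightarrow> nat \<Rightarrow> real" where
  "sgv n k = (\<lambda>i. if even (k div 2^(n-i)) then 1 else -1)"

definition dep_on :: "nat \<Rightarrow> ((nat \<Rightarrow> real) \<Rightarrow> real) \<Rightarrow> bool" where
  "dep_on n \<Phi> \<longleftrightarrow> (\<forall>\<rho> \<rho>'. (\<forall>i\<in>{1..n}. \<rho> i = \<rho>' i) \<longrightarrow> \<Phi> \<rho> = \<Phi> \<rho>')"

lemma dep_onD: "dep_on n \<Phi> \<Longrightarrow> (\<forall>i\<in>{1..n}. \<rho> i = \<rho>' i) \<Longrightarrow> \<Phi> \<rho> = \<Phi> \<rho>'"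
  unfolding dep_on_def by blast

lemma rad_integral_part:
  assumes dep: "dep_on n \<Phi>"
  shows "K \<le> 2^n \<Longrightarrow> ((\<lambda>t. \<Phi> (\<lambda>i. rademacher i t)) has_integral ((\<Sum>k<K. \<Phi> (sgv n k)) / 2^n)) {0..real K / 2^n}"
proof (induction K)
  case 0
  have e1: "real 0 / 2^n = (0::real)" by simp
  have e2: "(\<Sum>k<0. \<Phi> (sgv n k)) / 2^n = (0::real)" by simp
  show ?case unfolding e1 e2 atLeastAtMost_singleton by (rule has_integral_refl(2))
next
  case (Suc K)
  let ?f = "\<lambda>t. \<Phi> (\<lambda>i. rademacher i t)"
  let ?a = "real K / 2^n" and ?b = "(real K + 1) / 2^n"
  have ab: "?a \<le> ?b" by (simp add: divide_right_mono)
  have piece: "(?f has_integral (\<Phi> (sgv n K) / 2^n)) {?a..?b}"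
  proof (rule has_integral_spike_finite[of "{?a, ?b}"])
    show "finite {?a, ?b}" by simp
    fix x assume x: "x \<in> {?a..?b} - {?a, ?b}"
    hence x1: "?a < x" "x < ?b" by auto
    have "\<forall>i\<in>{1..n}. (\<lambda>i. rademacher i x) i = sgv n K i"
    proof
      fix i assume i: "i \<in> {1..n}"
      have "rademacher i x = (if even (K div 2^(n-i)) then 1 else -1)"
      proof (rule rad_val[OF _ _ x1(1) x1(2)])
        show "1 \<le> i" using i by simp
        show "i \<le> n" using i by simp
      qed
      thus "(\<lambda>i. rademacher i x) i = sgv n K i" unfolding sgv_def by simp
    qed
    thus "?f x = \<Phi> (sgv n K)" by (rule dep_onD[OF dep])
  next
    have "((\<lambda>x. \<Phi> (sgv n K)) has_integral ((?b - ?a) *\<^sub>R \<Phi> (sgv n K))) {?a..?b}"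
      using has_integral_const_real[of "\<Phi> (sgv n K)" ?a ?b] content_real[OF ab] by simp
    moreover have "?b - ?a = 1 / 2^n" by (simp only: diff_divide_distrib[symmetric] add_diff_cancel_left')
    ultimately show "((\<lambda>x. \<Phi> (sgv n K)) has_integral (\<Phi> (sgv n K) / 2^n)) {?a..?b}" by simp
  qed
  have KK: "K \<le> 2^n" using Suc.prems by simp
  have comb: "(?f has_integral ((\<Sum>k<K. \<Phi> (sgv n k)) / 2^n + \<Phi> (sgv n K) / 2^n)) {0..?b}"
    by (rule has_integral_combine[OF _ ab Suc.IH[OF KK] piece]) simp
  have eq1: "real (Suc K) / 2^n = ?b" by (metis of_nat_Suc add.commute)
  have eq2: "(\<Sum>k<Suc K. \<Phi> (sgv n k)) / 2^n = (\<Sum>k<K. \<Phi> (sgv n k)) / 2^n + \<Phi> (sgv n K) / 2^n"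
    by (simp only: sum.lessThan_Suc add_divide_distrib)
  show ?case unfolding eq1 eq2 by (rule comb)
qed

lemma rad_integral_sum:
  assumes dep: "dep_on n \<Phi>"
  shows "((\<lambda>t. \<Phi> (\<lambda>i. rademacher i t)) has_integral ((\<Sum>k<2^n. \<Phi> (sgv n k)) / 2^n)) {0..1}"
  using rad_integral_part[OF dep, of "2^n"] by simp



lemma sum_split2: "(\<Sum>k<2*(N::nat). f k) = (\<Sum>k<N. f (2*k) + f (2*k+1))"
  by (induction N) (simp_all add: algebra_simps)

lemma dep_on_upd: "dep_on (Suc n) \<Phi> \<Longrightarrow> dep_on n (\<lambda>\<rho>. \<Phi> (\<rho>(Suc n := c)))"
  unfolding dep_on_def
proof (intro allI impI)
  fix \<rho> \<rho>' :: "nat \<Rightarrow> real"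
  assume d: "\<forall>\<rho> \<rho>'. (\<forall>i\<in>{1..Suc n}. \<rho> i = \<rho>' i) \<longrightarrow> \<Phi> \<rho> = \<Phi> \<rho>'"
    and h: "\<forall>i\<in>{1..n}. \<rho> i = \<rho>' i"
  have "\<forall>i\<in>{1..Suc n}. (\<rho>(Suc n := c)) i = (\<rho>'(Suc n := c)) i"
  proof
    fix i assume "i \<in> {1..Suc n}"
    thus "(\<rho>(Suc n := c)) i = (\<rho>'(Suc n := c)) i" using h by (cases "i = Suc n") auto
  qed
  thus "\<Phi> (\<rho>(Suc n := c)) = \<Phi> (\<rho>'(Suc n := c))" using d by blast
qed

lemma sum_sigma_avg: "dep_on n \<Phi> \<Longrightarrow> (\<Sum>k<2^n. \<Phi> (sgv n k)) / 2^n = avg n \<Phi>"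
proof (induction n arbitrary: \<Phi>)
  case 0
  then show ?case unfolding dep_on_def by simp
next
  case (Suc n)
  define \<Phi>1 where "\<Phi>1 = (\<lambda>\<rho>. \<Phi> (\<rho>(Suc n := 1)))"
  define \<Phi>2 where "\<Phi>2 = (\<lambda>\<rho>. \<Phi> (\<rho>(Suc n := -1)))"
  have d1: "dep_on n \<Phi>1" unfolding \<Phi>1_def by (rule dep_on_upd[OF Suc.prems])
  have d2: "dep_on n \<Phi>2" unfolding \<Phi>2_def by (rule dep_on_upd[OF Suc.prems])
  have divs: "(2 * k + b) div 2 ^ (Suc n - i) = k div 2 ^ (n - i)" if "i \<le> n" "b < 2" for k b i :: nat
  proof -
    have "2 ^ (Suc n - i) = (2::nat) * 2 ^ (n - i)" using that by (simp add: Suc_diff_le)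
    hence "(2 * k + b) div 2 ^ (Suc n - i) = (2 * k + b) div 2 div 2 ^ (n - i)" by (simp add: div_mult2_eq)
    also have "(2 * k + b) div 2 = k" using that by simp
    finally show ?thesis .
  qed
  have eb: "\<Phi> (sgv (Suc n) (2*k+b)) = \<Phi> ((sgv n k)(Suc n := (if b = 0 then 1 else -1)))" if b: "b < 2" for k b :: nat
  proof (rule dep_onD[OF Suc.prems], rule ballI)
    fix i assume i: "i \<in> {1..Suc n}"
    show "sgv (Suc n) (2*k+b) i = ((sgv n k)(Suc n := (if b = 0 then 1 else -1))) i"
    proof (cases "i = Suc n")
      case True
      have "(2*k+b) div 2^(Suc n - i) = 2*k+b" using True by simp
      then show ?thesis using True b unfolding sgv_def by (cases "b = 0") auto
    next
      case False
      hence "i \<le> n" using i by simp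
      hence "(2*k+b) div 2^(Suc n - i) = k div 2^(n-i)" using divs b by blast
      then show ?thesis using False unfolding sgv_def by simp
    qed
  qed
  have e1: "\<Phi> (sgv (Suc n) (2*k)) = \<Phi>1 (sgv n k)" for k
    using eb[of 0 k] unfolding \<Phi>1_def by simp
  have e2: "\<Phi> (sgv (Suc n) (2*k+1)) = \<Phi>2 (sgv n k)" for k
    using eb[of 1 k] unfolding \<Phi>2_def by simp
  have "(\<Sum>k<2^Suc n. \<Phi> (sgv (Suc n) k)) = (\<Sum>k<2^n. \<Phi>1 (sgv n k) + \<Phi>2 (sgv n k))"
    using sum_split2[of "\<lambda>k. \<Phi> (sgv (Suc n) k)" "2^n"] e1 e2 by simp
  also have "\<dots> = (\<Sum>k<2^n. \<Phi>1 (sgv n k)) + (\<Sum>k<2^n. \<Phi>2 (sgv n k))" by (rule sum.distrib)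
  finally have "(\<Sum>k<2^Suc n. \<Phi> (sgv (Suc n) k)) / 2^Suc n
     = ((\<Sum>k<2^n. \<Phi>1 (sgv n k)) / 2^n + (\<Sum>k<2^n. \<Phi>2 (sgv n k)) / 2^n) / 2"
    by (simp add: field_simps)
  also have "\<dots> = avg (Suc n) \<Phi>" using Suc.IH[OF d1] Suc.IH[OF d2] by (simp add: \<Phi>1_def \<Phi>2_def)
  finally show ?case .
qed

lemma rad_integral_avg:
  assumes "dep_on n \<Phi>"
  shows "integral {0..1} (\<lambda>t. \<Phi> (\<lambda>i. rademacher i t)) = avg n \<Phi>"
  using rad_integral_sum[OF assms] sum_sigma_avg[OF assms] integral_unique by metis



definition p_ok :: "ereal \<Rightarrow> bool" where
  "p_ok p \<longleftrightarrow> p = \<infinity> \<or> 0 < real_of_ereal p"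

lemma lpnorm_nonneg: "0 \<le> lpnorm p m \<alpha>"
proof (cases "p = \<infinity> \<and> m \<noteq> 0")
  case True
  have "\<bar>\<alpha> 0\<bar> \<le> Max ((\<lambda>i. \<bar>\<alpha> i\<bar>) ` {..<m})" using True by (intro Max_ge) auto
  hence "0 \<le> Max ((\<lambda>i. \<bar>\<alpha> i\<bar>) ` {..<m})" by linarith
  thus ?thesis using True unfolding lpnorm_def by simp
next
  case False
  thus ?thesis unfolding lpnorm_def by auto
qed

lemma lpnorm_mono:
  assumes p: "p_ok p" and le: "\<And>i. i < m \<Longrightarrow> \<bar>\<alpha> i\<bar> \<le> \<bar>\<beta> i\<bar>"
  shows "lpnorm p m \<alpha> \<le> lpnorm p m \<beta>"
proof (cases "p = \<infinity>")
  case True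
  show ?thesis
  proof (cases "m = 0")
    case False
    have "Max ((\<lambda>i. \<bar>\<alpha> i\<bar>) ` {..<m}) \<le> Max ((\<lambda>i. \<bar>\<beta> i\<bar>) ` {..<m})"
    proof (subst Max_le_iff)
      show "finite ((\<lambda>i. \<bar>\<alpha> i\<bar>) ` {..<m})" by simp
      show "(\<lambda>i. \<bar>\<alpha> i\<bar>) ` {..<m} \<noteq> {}" using False by (simp add: lessThan_empty_iff)
      show "\<forall>a\<in>(\<lambda>i. \<bar>\<alpha> i\<bar>) ` {..<m}. a \<le> Max ((\<lambda>i. \<bar>\<beta> i\<bar>) ` {..<m})"
      proof
        fix a assume "a \<in> (\<lambda>i. \<bar>\<alpha> i\<bar>) ` {..<m}"
        then obtain i where i: "i < m" "a = \<bar>\<alpha> i\<bar>" by auto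
        have "\<bar>\<beta> i\<bar> \<le> Max ((\<lambda>i. \<bar>\<beta> i\<bar>) ` {..<m})" using i by (intro Max_ge) auto
        thus "a \<le> Max ((\<lambda>i. \<bar>\<beta> i\<bar>) ` {..<m})" using le[OF i(1)] i(2) by linarith
      qed
    qed
    thus ?thesis using True False unfolding lpnorm_def by simp
  qed (simp add: lpnorm_def True)
next
  case False
  hence pp: "0 < real_of_ereal p" using p unfolding p_ok_def by simp
  have "(\<Sum>i<m. \<bar>\<alpha> i\<bar> powr real_of_ereal p) \<le> (\<Sum>i<m. \<bar>\<beta> i\<bar> powr real_of_ereal p)"
    by (rule sum_mono, rule powr_mono2) (use pp le in auto)
  hence "(\<Sum>i<m. \<bar>\<alpha> i\<bar> powr real_of_ereal p) powr (1 / real_of_ereal p)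
       \<le> (\<Sum>i<m. \<bar>\<beta> i\<bar> powr real_of_ereal p) powr (1 / real_of_ereal p)"
    by (intro powr_mono2) (use pp in \<open>auto intro: sum_nonneg\<close>)
  thus ?thesis using False unfolding lpnorm_def by simp
qed

lemma lpnorm_scale:
  assumes p: "p_ok p" and c: "0 \<le> c"
  shows "lpnorm p m (\<lambda>i. c * \<alpha> i) = c * lpnorm p m \<alpha>"
proof (cases "p = \<infinity>")
  case True
  show ?thesis
  proof (cases "m = 0")
    case False
    have img: "(\<lambda>i. \<bar>c * \<alpha> i\<bar>) ` {..<m} = (\<lambda>x. c * x) ` ((\<lambda>i. \<bar>\<alpha> i\<bar>) ` {..<m})"
      using c by (auto simp: abs_mult image_image)
    have "Max ((\<lambda>x. c * x) ` ((\<lambda>i. \<bar>\<alpha> i\<bar>) ` {..<m})) = c * Max ((\<lambda>i. \<bar>\<alpha> i\<bar>) ` {..<m})"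
      by (rule mono_Max_commute[symmetric]) (use c False in \<open>auto simp: mono_def mult_left_mono\<close>)
    thus ?thesis using True False img unfolding lpnorm_def by simp
  qed (simp add: lpnorm_def True)
next
  case False
  define r where "r = real_of_ereal p"
  have pp: "0 < r" using p False unfolding p_ok_def r_def by simp
  show ?thesis
  proof (cases "c = 0")
    case True
    thus ?thesis using False pp unfolding lpnorm_def r_def[symmetric] by simp
  next
    case cn: False
    hence cp: "0 < c" using c by simp
    have "(\<Sum>i<m. \<bar>c * \<alpha> i\<bar> powr r) = c powr r * (\<Sum>i<m. \<bar>\<alpha> i\<bar> powr r)"
      using cp by (simp add: abs_mult powr_mult sum_distrib_left)
    hence "(\<Sum>i<m. \<bar>c * \<alpha> i\<bar> powr r) powr (1/r) = (c powr r) powr (1/r) * (\<Sum>i<m. \<bar>\<alpha> i\<bar> powr r) powr (1/r)"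
      by (simp add: powr_mult sum_nonneg)
    also have "(c powr r) powr (1/r) = c" using pp cp by (simp add: powr_powr)
    finally show ?thesis using False unfolding lpnorm_def r_def[symmetric] by simp
  qed
qed

lemma lpnorm_zero: "p_ok p \<Longrightarrow> lpnorm p m (\<lambda>i. 0) = 0"
  using lpnorm_scale[of p 0 m "\<lambda>i. 0"] by simp

lemma lpnorm_2: "lpnorm 2 m \<alpha> = sqrt (\<Sum>i<m. (\<alpha> i)\<^sup>2)"
proof -
  have "(\<Sum>i<m. \<bar>\<alpha> i\<bar> powr 2) = (\<Sum>i<m. (\<alpha> i)\<^sup>2)" by simp
  moreover have "real_of_ereal 2 = 2" by simp
  ultimately show ?thesis unfolding lpnorm_def
    by (simp add: powr_half_sqrt sum_nonneg)
qed

lemma p_ok_q: "1 < q \<Longrightarrow> p_ok q"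
  unfolding p_ok_def by (cases q) auto

lemma p_ok_conj: "1 < q \<Longrightarrow> p_ok (conj_exp q)"
  unfolding p_ok_def conj_exp_def by (cases q) auto

lemma holder_sum:
  assumes q: "1 < q"
  shows "(\<Sum>i<m. \<bar>\<alpha> i\<bar> * \<bar>\<beta> i\<bar>) \<le> lpnorm q m \<alpha> * lpnorm (conj_exp q) m \<beta>"
proof (cases "q = \<infinity>")
  case True
  have cq: "conj_exp q = 1" using True unfolding conj_exp_def by simp
  have l1: "lpnorm 1 m \<beta> = (\<Sum>i<m. \<bar>\<beta> i\<bar>)" unfolding lpnorm_def
    by (simp add: powr_one sum_nonneg)
  show ?thesis
  proof (cases "m = 0")
    case True thus ?thesis by (simp add: lpnorm_nonneg)
  next
    case False
    define M where "M = Max ((\<lambda>i. \<bar>\<alpha> i\<bar>) ` {..<m})"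
    have lm: "lpnorm q m \<alpha> = M" using True False unfolding lpnorm_def M_def by simp
    have "(\<Sum>i<m. \<bar>\<alpha> i\<bar> * \<bar>\<beta> i\<bar>) \<le> (\<Sum>i<m. M * \<bar>\<beta> i\<bar>)"
    proof (rule sum_mono)
      fix i assume "i \<in> {..<m}"
      hence "\<bar>\<alpha> i\<bar> \<le> M" unfolding M_def by (intro Max_ge) auto
      thus "\<bar>\<alpha> i\<bar> * \<bar>\<beta> i\<bar> \<le> M * \<bar>\<beta> i\<bar>" by (rule mult_right_mono) simp
    qed
    also have "\<dots> = M * (\<Sum>i<m. \<bar>\<beta> i\<bar>)" by (simp add: sum_distrib_left)
    finally show ?thesis using lm l1 cq by simp
  qed
next
  case False
  define Q where "Q = real_of_ereal q"
  have qe: "q = ereal Q" using q False unfolding Q_def by (cases q) auto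
  have Q1: "1 < Q" using q qe by simp
  define Q' where "Q' = Q / (Q - 1)"
  have cq: "conj_exp q = ereal Q'" using False unfolding conj_exp_def Q'_def Q_def by simp
  have Q'1: "1 < Q'" using Q1 unfolding Q'_def by (simp add: field_simps)
  have QQ: "1/Q + 1/Q' = 1" using Q1 unfolding Q'_def by (simp add: field_simps)
  define SA where "SA = (\<Sum>i<m. \<bar>\<alpha> i\<bar> powr Q)"
  define SB where "SB = (\<Sum>i<m. \<bar>\<beta> i\<bar> powr Q')"
  define A where "A = SA powr (1/Q)"
  define B where "B = SB powr (1/Q')"
  have lA: "lpnorm q m \<alpha> = A" unfolding lpnorm_def A_def SA_def using qe by simp
  have lB: "lpnorm (conj_exp q) m \<beta> = B" unfolding lpnorm_def B_def SB_def using cq by simp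
  have SA0: "0 \<le> SA" unfolding SA_def by (simp add: sum_nonneg)
  have SB0: "0 \<le> SB" unfolding SB_def by (simp add: sum_nonneg)
  show ?thesis
  proof (cases "A = 0 \<or> B = 0")
    case True
    then consider "SA = 0" | "SB = 0" unfolding A_def B_def by auto
    hence "\<forall>i<m. \<bar>\<alpha> i\<bar> * \<bar>\<beta> i\<bar> = 0"
    proof cases
      case 1
      hence "\<forall>i\<in>{..<m}. \<bar>\<alpha> i\<bar> powr Q = 0" unfolding SA_def by (subst sum_nonneg_eq_0_iff[symmetric]) auto
      thus ?thesis by auto
    next
      case 2
      hence "\<forall>i\<in>{..<m}. \<bar>\<beta> i\<bar> powr Q' = 0" unfolding SB_def by (subst sum_nonneg_eq_0_iff[symmetric]) auto
      thus ?thesis by auto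
    qed
    hence "(\<Sum>i<m. \<bar>\<alpha> i\<bar> * \<bar>\<beta> i\<bar>) = (\<Sum>i<m. 0)" by (intro sum.cong) auto
    hence "(\<Sum>i<m. \<bar>\<alpha> i\<bar> * \<bar>\<beta> i\<bar>) = 0" by simp
    thus ?thesis using lA lB True by auto
  next
    case False
    hence Ap: "0 < A" and Bp: "0 < B" unfolding A_def B_def by auto
    have SAp: "SA \<noteq> 0" using Ap unfolding A_def by auto
    have SBp: "SB \<noteq> 0" using Bp unfolding B_def by auto
    have AQ: "A powr Q = SA" unfolding A_def using Q1 SA0 by (simp add: powr_powr)
    have BQ: "B powr Q' = SB" unfolding B_def using Q'1 SB0 by (simp add: powr_powr)
    have pt: "(\<bar>\<alpha> i\<bar> / A) * (\<bar>\<beta> i\<bar> / B) \<le> \<bar>\<alpha> i\<bar> powr Q / (SA * Q) + \<bar>\<beta> i\<bar> powr Q' / (SB * Q')" for i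
    proof -
      have "(\<bar>\<alpha> i\<bar> / A) * (\<bar>\<beta> i\<bar> / B) \<le> (\<bar>\<alpha> i\<bar> / A) powr Q / Q + (\<bar>\<beta> i\<bar> / B) powr Q' / Q'"
        by (rule Youngs_inequality) (use Q1 Q'1 QQ Ap Bp in auto)
      also have "(\<bar>\<alpha> i\<bar> / A) powr Q = \<bar>\<alpha> i\<bar> powr Q / SA" using Ap AQ by (simp add: powr_divide)
      also have "(\<bar>\<beta> i\<bar> / B) powr Q' = \<bar>\<beta> i\<bar> powr Q' / SB" using Bp BQ by (simp add: powr_divide)
      finally show ?thesis by (simp add: field_simps)
    qed
    have "(\<Sum>i<m. (\<bar>\<alpha> i\<bar> / A) * (\<bar>\<beta> i\<bar> / B)) \<le> (\<Sum>i<m. \<bar>\<alpha> i\<bar> powr Q / (SA * Q) + \<bar>\<beta> i\<bar> powr Q' / (SB * Q'))"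
      by (rule sum_mono) (rule pt)
    also have "\<dots> = SA / (SA * Q) + SB / (SB * Q')"
      unfolding sum.distrib SA_def SB_def by (simp add: sum_divide_distrib)
    also have "\<dots> = 1" using SAp SBp QQ by simp
    finally have "(\<Sum>i<m. \<bar>\<alpha> i\<bar> * \<bar>\<beta> i\<bar>) / (A * B) \<le> 1"
      by (simp add: sum_divide_distrib)
    hence "(\<Sum>i<m. \<bar>\<alpha> i\<bar> * \<bar>\<beta> i\<bar>) \<le> A * B" using Ap Bp by (simp add: divide_le_eq)
    thus ?thesis using lA lB by simp
  qed
qed



lemma weak_norm_upper:
  fixes x :: "nat \<Rightarrow> 'e::real_normed_vector"
  assumes p: "p_ok p" and f: "norm f \<le> 1"
  shows "lpnorm p m (\<lambda>i. blinfun_apply f (x i)) \<le> weak_norm p m x"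
  unfolding weak_norm_def
proof (rule cSUP_upper)
  show "f \<in> {f. norm f \<le> 1}" using f by simp
  show "bdd_above ((\<lambda>f. lpnorm p m (\<lambda>i. blinfun_apply f (x i))) ` {f. norm f \<le> 1})"
  proof (rule bdd_aboveI2)
    fix g :: "'e \<Rightarrow>\<^sub>L real" assume g: "g \<in> {f. norm f \<le> 1}"
    show "lpnorm p m (\<lambda>i. blinfun_apply g (x i)) \<le> lpnorm p m (\<lambda>i. norm (x i))"
    proof (rule lpnorm_mono[OF p])
      fix i
      have "norm (blinfun_apply g (x i)) \<le> norm g * norm (x i)" by (rule norm_blinfun)
      also have "\<dots> \<le> 1 * norm (x i)" using g by (intro mult_right_mono) auto
      finally show "\<bar>blinfun_apply g (x i)\<bar> \<le> \<bar>norm (x i)\<bar>" by simp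
    qed
  qed
qed

lemma weak_norm_le:
  fixes x :: "nat \<Rightarrow> 'e::real_normed_vector"
  assumes "\<And>f :: 'e \<Rightarrow>\<^sub>L real. norm f \<le> 1 \<Longrightarrow> lpnorm p m (\<lambda>i. blinfun_apply f (x i)) \<le> B"
  shows "weak_norm p m x \<le> B"
  unfolding weak_norm_def
proof (rule cSUP_least)
  have "(0 :: 'e \<Rightarrow>\<^sub>L real) \<in> {f. norm f \<le> 1}" by simp
  thus "{f :: 'e \<Rightarrow>\<^sub>L real. norm f \<le> 1} \<noteq> {}" by blast
qed (use assms in auto)

lemma weak_norm_nonneg:
  fixes x :: "nat \<Rightarrow> 'e::real_normed_vector"
  assumes p: "p_ok p"
  shows "0 \<le> weak_norm p m x"
proof -
  have "0 \<le> lpnorm p m (\<lambda>i. blinfun_apply (0 :: 'e \<Rightarrow>\<^sub>L real) (x i))" by (rule lpnorm_nonneg)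
  also have "\<dots> \<le> weak_norm p m x" by (rule weak_norm_upper[OF p]) simp
  finally show ?thesis .
qed

lemma eval_bound:
  fixes y :: "nat \<Rightarrow> ('b::real_normed_vector \<Rightarrow>\<^sub>L real)" and Y :: 'b
  assumes p: "p_ok p"
  shows "lpnorm p m (\<lambda>i. blinfun_apply (y i) Y) \<le> norm Y * weak_norm p m y"
proof (cases "Y = 0")
  case True
  thus ?thesis using lpnorm_zero[OF p] by simp
next
  case False
  hence nY: "0 < norm Y" by simp
  define Z where "Z = Y /\<^sub>R norm Y"
  have nZ: "norm Z = 1" unfolding Z_def using nY by simp
  have bl: "bounded_linear (\<lambda>f :: 'b \<Rightarrow>\<^sub>L real. blinfun_apply f Z)"
    by (rule bounded_bilinear.bounded_linear_left[OF bounded_bilinear_blinfun_apply])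
  define \<phi> where "\<phi> = Blinfun (\<lambda>f :: 'b \<Rightarrow>\<^sub>L real. blinfun_apply f Z)"
  have \<phi>a: "blinfun_apply \<phi> f = blinfun_apply f Z" for f
    unfolding \<phi>_def using bounded_linear_Blinfun_apply[OF bl] by simp
  have n\<phi>: "norm \<phi> \<le> 1"
  proof (rule norm_blinfun_bound)
    fix f :: "'b \<Rightarrow>\<^sub>L real"
    have "norm (blinfun_apply f Z) \<le> norm f * norm Z" by (rule norm_blinfun)
    thus "norm (blinfun_apply \<phi> f) \<le> 1 * norm f" using nZ \<phi>a by simp
  qed simp
  have "lpnorm p m (\<lambda>i. blinfun_apply \<phi> (y i)) \<le> weak_norm p m y" by (rule weak_norm_upper[OF p n\<phi>])
  moreover have "(\<lambda>i. blinfun_apply \<phi> (y i)) = (\<lambda>i. (1 / norm Y) * blinfun_apply (y i) Y)"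
    unfolding \<phi>a Z_def by (simp add: blinfun.scaleR_right divide_inverse mult.commute)
  moreover have "lpnorm p m (\<lambda>i. (1 / norm Y) * blinfun_apply (y i) Y) = (1 / norm Y) * lpnorm p m (\<lambda>i. blinfun_apply (y i) Y)"
    by (rule lpnorm_scale[OF p]) simp
  ultimately have "(1 / norm Y) * lpnorm p m (\<lambda>i. blinfun_apply (y i) Y) \<le> weak_norm p m y" by simp
  thus ?thesis using nY by (simp add: field_simps)
qed



theorem corollary3p2:
  fixes q :: ereal and u :: "'a::banach \<Rightarrow> 'b::banach"
  assumes "1 < q"
    and "L2_space (UNIV :: 'a set)"
    and "almost_summing u"
  shows "cohen_strongly_summing q u"
proof -
  have q1: "1 < q" by fact
  have blu: "bounded_linear u" using assms(3) unfolding almost_summing_def by simp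
  hence lin: "linear u" by (rule bounded_linear.linear)
  have ex: "\<exists>C\<ge>0. \<forall>m (x :: nat \<Rightarrow> 'a).
        sqrt (integral {0..1} (\<lambda>t. (norm (\<Sum>i\<in>{1..m}. rademacher i t *\<^sub>R u (x i)))\<^sup>2))
          \<le> C * weak_norm 2 m (\<lambda>j. x (j + 1))"
    using assms(3) unfolding almost_summing_def by (rule conjunct2)
  then obtain C where C0: "C \<ge> 0" and ASa: "\<forall>m (x :: nat \<Rightarrow> 'a).
        sqrt (integral {0..1} (\<lambda>t. (norm (\<Sum>i\<in>{1..m}. rademacher i t *\<^sub>R u (x i)))\<^sup>2))
          \<le> C * weak_norm 2 m (\<lambda>j. x (j + 1))"
    by (elim exE conjE)
  have AS: "sqrt (integral {0..1} (\<lambda>t. (norm (\<Sum>i\<in>{1..m}. rademacher i t *\<^sub>R u (x i)))\<^sup>2))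
          \<le> C * weak_norm 2 m (\<lambda>j. x (j + 1))" for m and x :: "nat \<Rightarrow> 'a"
    using ASa by (elim allE)
  have exl: "\<exists>lam>1. \<forall>E. fin_dim_subspace E \<and> E \<subseteq> (UNIV :: 'a set) \<longrightarrow>
      (\<exists>F. fin_dim_subspace F \<and> E \<subseteq> F \<and> F \<subseteq> UNIV \<and> l2_isomorphic lam F)"
    using assms(2) unfolding L2_space_def .
  then obtain lam where lam1: "lam > 1" and L2a: "\<forall>E. fin_dim_subspace E \<and> E \<subseteq> (UNIV :: 'a set) \<longrightarrow>
      (\<exists>F. fin_dim_subspace F \<and> E \<subseteq> F \<and> F \<subseteq> UNIV \<and> l2_isomorphic lam F)"
    by (elim exE conjE)
  have L2: "\<exists>F. fin_dim_subspace F \<and> E \<subseteq> F \<and> F \<subseteq> UNIV \<and> l2_isomorphic lam F"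
    if "fin_dim_subspace E" for E :: "'a set"
    using L2a that by simp
  have pq: "p_ok q" by (rule p_ok_q[OF q1])
  have pq': "p_ok (conj_exp q)" by (rule p_ok_conj[OF q1])
  have p2: "p_ok 2" unfolding p_ok_def by simp
  have main: "(\<Sum>i<m. \<bar>blinfun_apply (y i) (u (x i))\<bar>)
          \<le> (2 * lam * C) * lpnorm q m (\<lambda>i. norm (x i)) * weak_norm (conj_exp q) m y"
    for m and x :: "nat \<Rightarrow> 'a" and y :: "nat \<Rightarrow> ('b \<Rightarrow>\<^sub>L real)"
  proof -
    define E where "E = span (x ` {..<m})"
    have "fin_dim_subspace E" unfolding fin_dim_subspace_def E_def
      by (auto intro!: exI[of _ "x ` {..<m}"])
    hence "\<exists>F. fin_dim_subspace F \<and> E \<subseteq> F \<and> F \<subseteq> UNIV \<and> l2_isomorphic lam F" by (rule L2)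
    then obtain F where Ff: "fin_dim_subspace F" and EF: "E \<subseteq> F" and iso: "l2_isomorphic lam F"
      by (elim exE conjE)
    have subF: "subspace F" using Ff unfolding fin_dim_subspace_def by simp
    define n where "n = dim F"
    obtain v :: "'a \<Rightarrow> nat \<Rightarrow> real" and a b where
      vadd: "\<forall>x\<in>F. \<forall>y\<in>F. v (x + y) = (\<lambda>j. v x j + v y j)" and
      vscale: "\<forall>c. \<forall>x\<in>F. v (c *\<^sub>R x) = (\<lambda>j. c * v x j)" and
      vbij: "bij_betw v F {y. \<forall>j\<ge>n. y j = 0}" and
      a0: "0 \<le> a" and b0: "0 \<le> b" and ab: "a * b \<le> lam" and
      vnorm: "\<forall>x\<in>F. l2n n (v x) \<le> a * norm x \<and> norm x \<le> b * l2n n (v x)"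
      using iso unfolding l2_isomorphic_def n_def by blast
    define T where "T = {y :: nat \<Rightarrow> real. \<forall>j\<ge>n. y j = 0}"
    have vimg: "v ` F = T" using vbij unfolding T_def by (rule bij_betw_imp_surj_on)
    have vinj: "inj_on v F" using vbij by (rule bij_betw_imp_inj_on)
    define e where "e j = (\<lambda>l::nat. if l = j then 1 else (0::real))" for j
    define xs where "xs k = inv_into F v (e (k - 1))" for k
    have eT: "e j \<in> T" if "j < n" for j using that unfolding T_def e_def by auto
    have xsF: "xs (Suc j) \<in> F" if "j < n" for j
      unfolding xs_def using eT[OF that] vimg by (simp add: inv_into_into)
    have vxs: "v (xs (Suc j)) = e j" if "j < n" for j
      unfolding xs_def using eT[OF that] vimg by (simp add: f_inv_into_f)
    have v0: "v 0 = (\<lambda>l. 0)"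
    proof -
      have "v (0 *\<^sub>R 0) = (\<lambda>j. 0 * v 0 j)" using vscale subspace_0[OF subF] by blast
      thus ?thesis by simp
    qed
    have vlin: "(\<Sum>k\<in>K. c k *\<^sub>R w k) \<in> F \<and> v (\<Sum>k\<in>K. c k *\<^sub>R w k) = (\<lambda>l. \<Sum>k\<in>K. c k * v (w k) l)"
      if "finite K" "\<forall>k\<in>K. w k \<in> F" for K :: "nat set" and c :: "nat \<Rightarrow> real" and w
      using that
    proof (induction K rule: finite_induct)
      case empty
      then show ?case using subspace_0[OF subF] v0 by simp
    next
      case (insert k K)
      have wk: "c k *\<^sub>R w k \<in> F" using insert.prems subspace_scale[OF subF] by simp
      have IH: "(\<Sum>k\<in>K. c k *\<^sub>R w k) \<in> F" "v (\<Sum>k\<in>K. c k *\<^sub>R w k) = (\<lambda>l. \<Sum>k\<in>K. c k * v (w k) l)"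
        using insert.IH insert.prems by auto
      have s: "(\<Sum>k\<in>insert k K. c k *\<^sub>R w k) = c k *\<^sub>R w k + (\<Sum>k\<in>K. c k *\<^sub>R w k)"
        using insert.hyps by simp
      have "v (c k *\<^sub>R w k + (\<Sum>k\<in>K. c k *\<^sub>R w k)) = (\<lambda>l. v (c k *\<^sub>R w k) l + v (\<Sum>k\<in>K. c k *\<^sub>R w k) l)"
        using vadd wk IH(1) by blast
      also have "v (c k *\<^sub>R w k) = (\<lambda>l. c k * v (w k) l)" using vscale insert.prems by simp
      finally have "v (\<Sum>k\<in>insert k K. c k *\<^sub>R w k) = (\<lambda>l. \<Sum>k\<in>insert k K. c k * v (w k) l)"
        unfolding s IH(2) using insert.hyps by simp
      moreover have "(\<Sum>k\<in>insert k K. c k *\<^sub>R w k) \<in> F" unfolding s using subspace_add[OF subF wk IH(1)] .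
      ultimately show ?case by simp
    qed
    have delta: "(\<lambda>l. \<Sum>j<n. c j * v (xs (Suc j)) l) = (\<lambda>l. if l < n then c l else 0)" for c
    proof
      fix l
      have "(\<Sum>j<n. c j * v (xs (Suc j)) l) = (\<Sum>j<n. if j = l then c j else 0)"
        by (rule sum.cong) (auto simp: vxs e_def)
      also have "\<dots> = (if l < n then c l else 0)" by (simp add: sum.delta)
      finally show "(\<Sum>j<n. c j * v (xs (Suc j)) l) = (if l < n then c l else 0)" .
    qed
    have decomp: "x' = (\<Sum>j<n. v x' j *\<^sub>R xs (Suc j))" if x'F: "x' \<in> F" for x'
    proof -
      have vl: "(\<Sum>j<n. v x' j *\<^sub>R xs (Suc j)) \<in> F \<and> v (\<Sum>j<n. v x' j *\<^sub>R xs (Suc j)) = (\<lambda>l. \<Sum>j<n. v x' j * v (xs (Suc j)) l)"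
        by (rule vlin) (use xsF in auto)
      have "v x' \<in> T" using x'F vimg by blast
      hence "(\<lambda>l. if l < n then v x' l else 0) = v x'" unfolding T_def by force
      hence "v (\<Sum>j<n. v x' j *\<^sub>R xs (Suc j)) = v x'" using vl delta[of "v x'"] by simp
      thus ?thesis using vinj vl x'F by (metis inj_on_def)
    qed
    have wb: "weak_norm 2 n (\<lambda>j. xs (j + 1)) \<le> b"
    proof (rule weak_norm_le)
      fix f :: "'a \<Rightarrow>\<^sub>L real" assume nf: "norm f \<le> 1"
      define c where "c j = blinfun_apply f (xs (Suc j))" for j
      define S where "S = (\<Sum>j<n. (c j)\<^sup>2)"
      define w where "w = (\<Sum>j<n. c j *\<^sub>R xs (Suc j))"
      have vl: "w \<in> F \<and> v w = (\<lambda>l. \<Sum>j<n. c j * v (xs (Suc j)) l)"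
        unfolding w_def by (rule vlin) (use xsF in auto)
      have vw: "v w = (\<lambda>l. if l < n then c l else 0)" using vl delta by simp
      have l2: "l2n n (v w) = sqrt S" unfolding l2n_def S_def vw by simp
      have fw: "blinfun_apply f w = S"
        unfolding w_def S_def c_def by (simp add: blinfun.sum_right blinfun.scaleR_right power2_eq_square)
      have "S \<le> norm (blinfun_apply f w)" using fw by simp
      also have "\<dots> \<le> norm f * norm w" by (rule norm_blinfun)
      also have "\<dots> \<le> 1 * norm w" using nf by (intro mult_right_mono) auto
      also have "\<dots> = norm w" by simp
      also have "\<dots> \<le> b * l2n n (v w)" using vnorm vl by blast
      also have "\<dots> = b * sqrt S" by (simp only: l2)
      finally have Sb: "S \<le> b * sqrt S" .
      have S0: "0 \<le> S" unfolding S_def by (simp add: sum_nonneg)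
      have sb: "sqrt S \<le> b"
      proof (cases "S = 0")
        case True thus ?thesis using b0 by simp
      next
        case False
        hence sp: "0 < sqrt S" using S0 by simp
        have e: "sqrt S * sqrt S = S" using real_sqrt_mult_self[of S] S0 by simp
        have "sqrt S * sqrt S \<le> b * sqrt S" unfolding e by (rule Sb)
        thus ?thesis using sp by (rule mult_right_le_imp_le)
      qed
      have "lpnorm 2 n (\<lambda>i. blinfun_apply f (xs (i + 1))) = sqrt S"
        unfolding lpnorm_2 S_def c_def by simp
      thus "lpnorm 2 n (\<lambda>i. blinfun_apply f (xs (i + 1))) \<le> b" using sb by simp
    qed
    define Yv where "Yv \<rho> = (\<Sum>k\<in>{1..n}. \<rho> k *\<^sub>R u (xs k))" for \<rho>
    define \<Psi> where "\<Psi> \<rho> = (norm (Yv \<rho>))\<^sup>2" for \<rho>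
    have dep: "dep_on n \<Psi>" unfolding dep_on_def
    proof (intro allI impI)
      fix \<rho> \<rho>' :: "nat \<Rightarrow> real" assume h: "\<forall>i\<in>{1..n}. \<rho> i = \<rho>' i"
      have "Yv \<rho> = Yv \<rho>'" unfolding Yv_def by (rule sum.cong) (use h in auto)
      thus "\<Psi> \<rho> = \<Psi> \<rho>'" unfolding \<Psi>_def by simp
    qed
    have int: "integral {0..1} (\<lambda>t. (norm (\<Sum>i\<in>{1..n}. rademacher i t *\<^sub>R u (xs i)))\<^sup>2) = avg n \<Psi>"
      using rad_integral_avg[OF dep] unfolding \<Psi>_def Yv_def by simp
    have avgY: "avg n (\<lambda>\<rho>. norm (Yv \<rho>)) \<le> C * b"
    proof -
      have "avg n (\<lambda>\<rho>. norm (Yv \<rho>)) = avg n (\<lambda>\<rho>. \<bar>norm (Yv \<rho>)\<bar>)" by simp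
      also have "\<dots> \<le> sqrt (avg n (\<lambda>\<rho>. (norm (Yv \<rho>))\<^sup>2))" by (rule avg_jensen)
      also have "\<dots> = sqrt (avg n \<Psi>)" unfolding \<Psi>_def ..
      also have "\<dots> \<le> C * weak_norm 2 n (\<lambda>j. xs (j + 1))" using AS[where m=n and x=xs] unfolding int .
      also have "\<dots> \<le> C * b" by (rule mult_left_mono[OF wb C0])
      finally show ?thesis .
    qed
    have perI: "\<bar>blinfun_apply (y i) (u (x i))\<bar> \<le> (2 * a * norm (x i)) * avg n (\<lambda>\<rho>. \<bar>blinfun_apply (y i) (Yv \<rho>)\<bar>)"
      if im: "i < m" for i
    proof -
      have "x i \<in> x ` {..<m}" using im by simp
      hence "x i \<in> E" unfolding E_def by (rule span_base)
      hence xiF: "x i \<in> F" using EF by (rule subsetD[rotated])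
      define z where "z = v (x i)"
      define A where "A k = blinfun_apply (y i) (u (xs k))" for k
      have "x i = (\<Sum>j<n. z j *\<^sub>R xs (Suc j))" unfolding z_def by (rule decomp[OF xiF])
      hence "u (x i) = (\<Sum>j<n. z j *\<^sub>R u (xs (Suc j)))"
        by (simp add: linear_sum[OF lin] linear_scale[OF lin])
      hence "blinfun_apply (y i) (u (x i)) = (\<Sum>j<n. z j * A (Suc j))"
        by (simp add: A_def blinfun.sum_right blinfun.scaleR_right)
      hence "\<bar>blinfun_apply (y i) (u (x i))\<bar> \<le> (\<Sum>j<n. \<bar>z j\<bar> * \<bar>A (Suc j)\<bar>)"
        by (simp add: sum_abs[THEN order_trans] abs_mult)
      also have "\<dots> \<le> L2_set z {..<n} * L2_set (\<lambda>j. A (Suc j)) {..<n}" by (rule L2_set_mult_ineq)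
      finally have s1: "\<bar>blinfun_apply (y i) (u (x i))\<bar> \<le> L2_set z {..<n} * L2_set (\<lambda>j. A (Suc j)) {..<n}" .
      have e1: "L2_set z {..<n} = l2n n z" unfolding L2_set_def l2n_def ..
      have e2: "L2_set (\<lambda>j. A (Suc j)) {..<n} = sqrt (\<Sum>k\<in>{1..n}. (A k)\<^sup>2)"
        unfolding L2_set_def by (simp add: sum.atLeast1_atMost_eq)
      have rs: "(\<lambda>\<rho>. \<bar>rsum n A \<rho>\<bar>) = (\<lambda>\<rho>. \<bar>blinfun_apply (y i) (Yv \<rho>)\<bar>)"
        unfolding rsum_def Yv_def A_def by (simp add: blinfun.sum_right blinfun.scaleR_right)
      have kh: "sqrt (\<Sum>k\<in>{1..n}. (A k)\<^sup>2) \<le> 2 * avg n (\<lambda>\<rho>. \<bar>blinfun_apply (y i) (Yv \<rho>)\<bar>)"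
        using khintchine[where n=n and a=A] unfolding rs .
      have l0: "0 \<le> l2n n z" unfolding l2n_def by (rule real_sqrt_ge_zero, rule sum_nonneg) simp
      have "\<bar>blinfun_apply (y i) (u (x i))\<bar> \<le> l2n n z * (2 * avg n (\<lambda>\<rho>. \<bar>blinfun_apply (y i) (Yv \<rho>)\<bar>))"
        using s1 mult_left_mono[OF kh l0] unfolding e1 e2 by linarith
      also have "\<dots> \<le> (a * norm (x i)) * (2 * avg n (\<lambda>\<rho>. \<bar>blinfun_apply (y i) (Yv \<rho>)\<bar>))"
      proof (rule mult_right_mono)
        show "l2n n z \<le> a * norm (x i)" using vnorm xiF unfolding z_def by blast
        show "0 \<le> 2 * avg n (\<lambda>\<rho>. \<bar>blinfun_apply (y i) (Yv \<rho>)\<bar>)" by (simp add: avg_nonneg)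
      qed
      finally show ?thesis by (simp add: mult_ac)
    qed
    define Lx where "Lx = lpnorm q m (\<lambda>i. norm (x i))"
    define W where "W = weak_norm (conj_exp q) m y"
    have Lx0: "0 \<le> Lx" unfolding Lx_def by (rule lpnorm_nonneg)
    have W0: "0 \<le> W" unfolding W_def by (rule weak_norm_nonneg[OF pq'])
    have pw: "(\<Sum>i<m. (2 * a * norm (x i)) * \<bar>blinfun_apply (y i) (Yv \<rho>)\<bar>) \<le> (2 * a * Lx * W) * norm (Yv \<rho>)" for \<rho>
    proof -
      have "(\<Sum>i<m. (2 * a * norm (x i)) * \<bar>blinfun_apply (y i) (Yv \<rho>)\<bar>)
          = (2 * a) * (\<Sum>i<m. \<bar>norm (x i)\<bar> * \<bar>blinfun_apply (y i) (Yv \<rho>)\<bar>)"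
        by (simp add: sum_distrib_left mult_ac)
      also have "\<dots> \<le> (2 * a) * (Lx * lpnorm (conj_exp q) m (\<lambda>i. blinfun_apply (y i) (Yv \<rho>)))"
        unfolding Lx_def using a0 by (intro mult_left_mono holder_sum[OF q1]) auto
      also have "\<dots> \<le> (2 * a) * (Lx * (norm (Yv \<rho>) * W))"
        unfolding W_def using a0 Lx0 by (intro mult_left_mono eval_bound[OF pq']) auto
      finally show ?thesis by (simp add: mult_ac)
    qed
    have "(\<Sum>i<m. \<bar>blinfun_apply (y i) (u (x i))\<bar>)
        \<le> (\<Sum>i<m. (2 * a * norm (x i)) * avg n (\<lambda>\<rho>. \<bar>blinfun_apply (y i) (Yv \<rho>)\<bar>))"
      by (rule sum_mono) (rule perI, simp)
    also have "\<dots> = avg n (\<lambda>\<rho>. \<Sum>i<m. (2 * a * norm (x i)) * \<bar>blinfun_apply (y i) (Yv \<rho>)\<bar>)"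
      by (simp add: avg_sum avg_cmult)
    also have "\<dots> \<le> avg n (\<lambda>\<rho>. (2 * a * Lx * W) * norm (Yv \<rho>))" by (rule avg_mono) (rule pw)
    also have "\<dots> = (2 * a * Lx * W) * avg n (\<lambda>\<rho>. norm (Yv \<rho>))" by (rule avg_cmult)
    also have "\<dots> \<le> (2 * a * Lx * W) * (C * b)"
      using a0 Lx0 W0 avgY by (intro mult_left_mono) auto
    also have "\<dots> = 2 * (a * b) * C * Lx * W" by (simp add: mult_ac)
    also have "\<dots> \<le> 2 * lam * C * Lx * W"
      using ab C0 Lx0 W0 by (intro mult_right_mono) auto
    finally show ?thesis unfolding Lx_def W_def .
  qed
  show ?thesis unfolding cohen_strongly_summing_def
  proof (intro conjI blu exI[of _ "2 * lam * C"] allI)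
    show "0 \<le> 2 * lam * C" using lam1 C0 by simp
  qed (rule main)
qed


end
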